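(* Let $L$ be a lattice with discriminant $d$, and let $G$ be a finite group acting on $L$ preserving the bilinear form. If $L^G\neq0$, then the restriction of the bilinear form makes $L^G$ a lattice whose discriminant divides $(d|G|)^r$, where $r=\mathrm{rk}(L^G)$.
   Context: A lattice is a free abelian group of finite positive rank with a non-degenerate integral symmetric bilinear form; its discriminant is the determinant of the Gram matrix in a $\mathbb{Z}$-basis. $L^G$ is the subgroup of $G$-invariant elements. *)

theory Defs
  imports "HOL-Algebra.Group" "Jordan_Normal_Form.Determinant"
begin

text \<open>A lattice of rank n is modelled as Z^n (integer vectors of dimension n)
  with the integral symmetric bilinear form b(x,y) = x . (B y) given by its Gram
  matrix B in the standard basis. Its discriminant is det B.\<close>

definition bform :: "int mat \<Rightarrow> int vec \<Rightarrow> int vec \<Rightarrow> int" where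
  "bform B x y = x \<bullet> (B *\<^sub>v y)"

definition is_lattice_gram :: "nat \<Rightarrow> int mat \<Rightarrow> bool" where
  "is_lattice_gram n B \<longleftrightarrow> n > 0 \<and> B \<in> carrier_mat n n \<and> transpose_mat B = B \<and> det B \<noteq> 0"

definition form_preserving_action ::
  "nat \<Rightarrow> int mat \<Rightarrow> ('g, 'b) monoid_scheme \<Rightarrow> ('g \<Rightarrow> int mat) \<Rightarrow> bool" where
  "form_preserving_action n B G \<rho> \<longleftrightarrow>
     (\<forall>g\<in>carrier G. \<rho> g \<in> carrier_mat n n) \<and>
     \<rho> \<one>\<^bsub>G\<^esub> = 1\<^sub>m n \<and>
     (\<forall>g\<in>carrier G. \<forall>h\<in>carrier G. \<rho> (g \<otimes>\<^bsub>G\<^esub> h) = \<rho> g * \<rho> h) \<and>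
     (\<forall>g\<in>carrier G. \<forall>x\<in>carrier_vec n. \<forall>y\<in>carrier_vec n.
        bform B (\<rho> g *\<^sub>v x) (\<rho> g *\<^sub>v y) = bform B x y)"

definition invariants :: "nat \<Rightarrow> ('g, 'b) monoid_scheme \<Rightarrow> ('g \<Rightarrow> int mat) \<Rightarrow> int vec set" where
  "invariants n G \<rho> = {x \<in> carrier_vec n. \<forall>g\<in>carrier G. \<rho> g *\<^sub>v x = x}"

definition zcomb :: "nat \<Rightarrow> (nat \<Rightarrow> int) \<Rightarrow> int vec list \<Rightarrow> int vec" where
  "zcomb n c vs = foldr (\<lambda>i acc. c i \<cdot>\<^sub>v (vs ! i) + acc) [0..<length vs] (0\<^sub>v n)"

definition is_Z_basis :: "nat \<Rightarrow> int vec set \<Rightarrow> int vec list \<Rightarrow> bool" where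
  "is_Z_basis n S vs \<longleftrightarrow>
     set vs \<subseteq> S \<and>
     (\<forall>c. zcomb n c vs = 0\<^sub>v n \<longrightarrow> (\<forall>i<length vs. c i = 0)) \<and>
     (\<forall>x\<in>S. \<exists>c. x = zcomb n c vs)"

definition gram :: "int mat \<Rightarrow> int vec list \<Rightarrow> int mat" where
  "gram B vs = mat (length vs) (length vs) (\<lambda>(i, j). bform B (vs ! i) (vs ! j))"

end

theory Submission
  imports Defs
begin


lemma zcomb_gen:
  assumes "set vs \<subseteq> carrier_vec n" "set js \<subseteq> {..<length vs}"
  shows "foldr (\<lambda>i acc. c i \<cdot>\<^sub>v (vs ! i) + acc) js (0\<^sub>v n) \<in> carrier_vec n \<and>
    (\<forall>m<n. foldr (\<lambda>i acc. c i \<cdot>\<^sub>v (vs ! i) + acc) js (0\<^sub>v n) $ m = sum_list (map (\<lambda>i. c i * vs ! i $ m) js))"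
  using assms(2)
proof (induction js)
  case Nil
  then show ?case by (auto simp: atLeast0LessThan)
next
  case (Cons a js)
  have a: "vs ! a \<in> carrier_vec n" using Cons.prems assms(1) by (auto simp: atLeast0LessThan)
  show ?case using Cons a by (auto simp: atLeast0LessThan)
qed

lemma zcomb_carrier: "set vs \<subseteq> carrier_vec n \<Longrightarrow> zcomb n c vs \<in> carrier_vec n"
  unfolding zcomb_def using zcomb_gen[of vs n "[0..<length vs]" c] by (auto simp: atLeast0LessThan)

lemma zcomb_index: "set vs \<subseteq> carrier_vec n \<Longrightarrow> m < n \<Longrightarrow>
   zcomb n c vs $ m = (\<Sum>i<length vs. c i * vs ! i $ m)"
  unfolding zcomb_def using zcomb_gen[of vs n "[0..<length vs]" c]
  by (auto simp: sum_list_distinct_conv_sum_set atLeast0LessThan)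



lemma is_Z_basis_iff:
  assumes "set vs \<subseteq> carrier_vec n" "T \<subseteq> carrier_vec n"
  shows "is_Z_basis n T vs \<longleftrightarrow> set vs \<subseteq> T \<and>
    (\<forall>c. (\<forall>m<n. (\<Sum>i<length vs. c i * vs ! i $ m) = 0) \<longrightarrow> (\<forall>i<length vs. c i = 0)) \<and>
    (\<forall>x\<in>T. \<exists>c. \<forall>m<n. x $ m = (\<Sum>i<length vs. c i * vs ! i $ m))"
proof -
  have e1: "zcomb n c vs = 0\<^sub>v n \<longleftrightarrow> (\<forall>m<n. (\<Sum>i<length vs. c i * vs ! i $ m) = 0)" for c
    using zcomb_carrier[OF assms(1), of c] zcomb_index[OF assms(1), of _ c]
    by (metis (no_types, lifting) carrier_vecD eq_vecI index_zero_vec(1,2))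
  have e2: "x = zcomb n c vs \<longleftrightarrow> (\<forall>m<n. x $ m = (\<Sum>i<length vs. c i * vs ! i $ m))" if "x \<in> T" for x c
    using zcomb_carrier[OF assms(1), of c] zcomb_index[OF assms(1), of _ c] that assms(2)
    by (metis (no_types, lifting) carrier_vecD eq_vecI subsetD)
  show ?thesis unfolding is_Z_basis_def using e1 e2 by meson
qed

lemma sum_snoc:
  "(\<Sum>i<length vs + 1. c i * (vs @ [s]) ! i $ m) = (\<Sum>i<length vs. c i * vs ! i $ m) + c (length vs) * s $ m"
  by (simp add: nth_append)

lemma subgroup_basis_aux:
  fixes S :: "int vec set"
  assumes S: "S \<subseteq> carrier_vec n" "0\<^sub>v n \<in> S" "\<And>x y. x \<in> S \<Longrightarrow> y \<in> S \<Longrightarrow> x + y \<in> S"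
    "\<And>x c. x \<in> S \<Longrightarrow> c \<cdot>\<^sub>v x \<in> S"
  shows "k \<le> n \<Longrightarrow> \<exists>vs. is_Z_basis n {x\<in>S. \<forall>i. k \<le> i \<and> i < n \<longrightarrow> x $ i = 0} vs"
proof (induction k)
  case 0
  let ?T = "{x\<in>S. \<forall>i. 0 \<le> i \<and> i < n \<longrightarrow> x $ i = 0}"
  have "?T \<subseteq> carrier_vec n" using S by auto
  moreover have "\<forall>x\<in>?T. \<forall>m<n. x $ m = (\<Sum>i<length ([]::int vec list). c i * [] ! i $ m)" for c by auto
  ultimately show ?case using is_Z_basis_iff[of "[]" n ?T] by auto
next
  case (Suc k)
  define T where "T = {x\<in>S. \<forall>i. k \<le> i \<and> i < n \<longrightarrow> x $ i = 0}"
  define T' where "T' = {x\<in>S. \<forall>i. Suc k \<le> i \<and> i < n \<longrightarrow> x $ i = 0}"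
  have kn: "k < n" using Suc by auto
  obtain vs where vs: "is_Z_basis n T vs" using Suc unfolding T_def by auto
  have TT': "T \<subseteq> T'" unfolding T_def T'_def by auto
  have Tc: "T \<subseteq> carrier_vec n" "T' \<subseteq> carrier_vec n" using S unfolding T_def T'_def by auto
  have vsc: "set vs \<subseteq> carrier_vec n" using vs Tc unfolding is_Z_basis_def by auto
  note vsb = vs[unfolded is_Z_basis_iff[OF vsc Tc(1)]]
  have T'add: "x + y \<in> T'" if "x \<in> T'" "y \<in> T'" for x y
    using that S(3)[of x y] Tc(2) unfolding T'_def by auto
  have T'sm: "c \<cdot>\<^sub>v x \<in> T'" if "x \<in> T'" for x c
    using that S(4)[of x c] Tc(2) unfolding T'_def by auto
  show ?case
  proof (cases "\<forall>x\<in>T'. x $ k = 0")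
    case True
    have "T' \<subseteq> T"
    proof
      fix x assume x: "x \<in> T'"
      have "x $ i = 0" if "k \<le> i" "i < n" for i
      proof (cases "i = k")
        case True then show ?thesis using x \<open>\<forall>x\<in>T'. x $ k = 0\<close> by auto
      next
        case False then show ?thesis using x that unfolding T'_def by auto
      qed
      then show "x \<in> T" using x unfolding T_def T'_def by auto
    qed
    then have "T' = T" using TT' by auto
    then show ?thesis using vs unfolding T'_def T_def by auto
  next
    case False
    then obtain x0 where x0: "x0 \<in> T'" "x0 $ k \<noteq> 0" by auto
    define I where "I = {a::int. a > 0 \<and> (\<exists>x\<in>T'. x $ k = a)}"
    have "\<exists>a. a \<in> I"
    proof (cases "x0 $ k > 0")
      case True then show ?thesis using x0 unfolding I_def by auto
    next
      case False
      have "(-1) \<cdot>\<^sub>v x0 \<in> T'" using T'sm x0 by auto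
      moreover have "((-1) \<cdot>\<^sub>v x0) $ k = - (x0 $ k)" using x0 Tc kn by auto
      ultimately show ?thesis using False x0 unfolding I_def by (intro exI[of _ "- (x0 $ k)"]) auto
    qed
    then obtain a0 where "a0 \<in> I" by auto
    define J where "J = {m::nat. int m \<in> I}"
    have "nat a0 \<in> J" using \<open>a0 \<in> I\<close> unfolding J_def I_def by auto
    define a where "a = int (LEAST m. m \<in> J)"
    have aI: "a \<in> I" unfolding a_def using LeastI[of "\<lambda>m. m \<in> J", OF \<open>nat a0 \<in> J\<close>]
      unfolding J_def by auto
    have amin: "a \<le> b" if "b \<in> I" for b
    proof -
      have "nat b \<in> J" using that unfolding J_def I_def by auto
      then have "(LEAST m. m \<in> J) \<le> nat b" by (rule Least_le)
      then show ?thesis unfolding a_def using that unfolding I_def by auto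
    qed
    have apos: "a > 0" using aI unfolding I_def by auto
    obtain s where s: "s \<in> T'" "s $ k = a" using aI unfolding I_def by auto
    have sc: "s \<in> carrier_vec n" using s Tc by auto
    define r where "r = length vs"
    have vsk: "vs ! i $ k = 0" if "i < r" for i
    proof -
      have "vs ! i \<in> T" using vsb that unfolding r_def by auto
      then show ?thesis using kn unfolding T_def by auto
    qed
    have vs'c: "set (vs @ [s]) \<subseteq> carrier_vec n" using vsc sc by auto
    have "is_Z_basis n T' (vs @ [s])"
      unfolding is_Z_basis_iff[OF vs'c Tc(2)]
    proof (intro conjI allI impI ballI)
      show "set (vs @ [s]) \<subseteq> T'" using vsb TT' s by auto
    next
      fix c assume h: "\<forall>m<n. (\<Sum>i<length (vs @ [s]). c i * (vs @ [s]) ! i $ m) = 0"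
      have h2: "(\<Sum>i<r. c i * vs ! i $ m) + c r * s $ m = 0" if "m < n" for m
        using h that sum_snoc[of c vs s m] unfolding r_def by auto
      have "(\<Sum>i<r. c i * vs ! i $ k) = 0" using vsk by auto
      then have "c r * a = 0" using h2[OF kn] s by auto
      then have cr: "c r = 0" using apos by auto
      then have "\<forall>m<n. (\<Sum>i<r. c i * vs ! i $ m) = 0" using h2 by auto
      then have "\<forall>i<r. c i = 0" using vsb unfolding r_def by blast
      fix i assume "i < length (vs @ [s])"
      then show "c i = 0" using cr \<open>\<forall>i<r. c i = 0\<close> unfolding r_def
        by (metis length_append_singleton less_Suc_eq)
    next
      fix x assume x: "x \<in> T'"
      define q where "q = x $ k div a"
      define z where "z = x + (-q) \<cdot>\<^sub>v s"
      have zT': "z \<in> T'" unfolding z_def using T'add T'sm x s by auto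
      have xc: "x \<in> carrier_vec n" using x Tc by auto
      have zk: "z $ k = x $ k mod a" unfolding z_def q_def using xc sc kn s
        by (simp add: minus_div_mult_eq_mod[symmetric] algebra_simps)
      have "z $ k = 0"
      proof (rule ccontr)
        assume "z $ k \<noteq> 0"
        then have "z $ k > 0" using zk apos by (metis pos_mod_sign order_le_less)
        then have "z $ k \<in> I" using zT' unfolding I_def by auto
        then have "a \<le> z $ k" by (rule amin)
        moreover have "z $ k < a" using zk apos by auto
        ultimately show False by auto
      qed
      then have "z \<in> T" using zT' unfolding T_def T'_def
        using le_eq_less_or_eq Suc_le_eq by auto
      then obtain c where c: "\<forall>m<n. z $ m = (\<Sum>i<r. c i * vs ! i $ m)" using vsb unfolding r_def by blast
      show "\<exists>c. \<forall>m<n. x $ m = (\<Sum>i<length (vs @ [s]). c i * (vs @ [s]) ! i $ m)"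
      proof (intro exI allI impI)
        fix m assume m: "m < n"
        have "(\<Sum>i<r. (c(r := q)) i * vs ! i $ m) = (\<Sum>i<r. c i * vs ! i $ m)"
          by (rule sum.cong) auto
        then have "(\<Sum>i<length (vs @ [s]). (c(r := q)) i * (vs @ [s]) ! i $ m) = z $ m + q * s $ m"
          using sum_snoc[of "c(r := q)" vs s m] c m unfolding r_def by auto
        also have "\<dots> = x $ m" unfolding z_def using xc sc m by auto
        finally show "x $ m = (\<Sum>i<length (vs @ [s]). (c(r := q)) i * (vs @ [s]) ! i $ m)" by simp
      qed
    qed
    then show ?thesis unfolding T'_def by auto
  qed
qed



lemma mv_sum: "A \<in> carrier_mat n n \<Longrightarrow> v \<in> carrier_vec n \<Longrightarrow> i < n \<Longrightarrow>
  (A *\<^sub>v v) $ i = (\<Sum>l<n. A $$ (i, l) * v $ l)"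
  by (auto simp: scalar_prod_def row_def atLeast0LessThan)

lemma bform_sum: "B \<in> carrier_mat n n \<Longrightarrow> x \<in> carrier_vec n \<Longrightarrow> y \<in> carrier_vec n \<Longrightarrow>
  bform B x y = (\<Sum>a<n. x $ a * (\<Sum>b<n. B $$ (a, b) * y $ b))"
  unfolding bform_def by (auto simp: scalar_prod_def mv_sum atLeast0LessThan)

lemma mv_unit: "(A :: int mat) \<in> carrier_mat n n \<Longrightarrow> l < n \<Longrightarrow> m < n \<Longrightarrow> (A *\<^sub>v unit_vec n l) $ m = A $$ (m, l)"
proof -
  assume A: "A \<in> carrier_mat n n" and l: "l < n" and m: "m < n"
  have "(A *\<^sub>v unit_vec n l) $ m = row A m \<bullet> unit_vec n l" using A m by auto
  also have "\<dots> = row A m $ l" using l by (rule scalar_prod_right_unit)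
  also have "\<dots> = A $$ (m, l)" using A l m by auto
  finally show ?thesis .
qed

locale lat =
  fixes G :: "('g, 'b) monoid_scheme" and \<rho> :: "'g \<Rightarrow> int mat" and B :: "int mat" and n :: nat
  assumes grp: "group G" and fin: "finite (carrier G)" and lg: "is_lattice_gram n B"
    and act: "form_preserving_action n B G \<rho>"
begin

lemma Bc: "B \<in> carrier_mat n n" using lg unfolding is_lattice_gram_def by auto
lemma dB: "det B \<noteq> 0" using lg unfolding is_lattice_gram_def by auto
lemma rc: "g \<in> carrier G \<Longrightarrow> \<rho> g \<in> carrier_mat n n" using act unfolding form_preserving_action_def by auto
lemma rone: "\<rho> \<one>\<^bsub>G\<^esub> = 1\<^sub>m n" using act unfolding form_preserving_action_def by auto
lemma rmult: "g \<in> carrier G \<Longrightarrow> h \<in> carrier G \<Longrightarrow> \<rho> (g \<otimes>\<^bsub>G\<^esub> h) = \<rho> g * \<rho> h"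
  using act unfolding form_preserving_action_def by auto
lemma rform: "g \<in> carrier G \<Longrightarrow> x \<in> carrier_vec n \<Longrightarrow> y \<in> carrier_vec n \<Longrightarrow>
  bform B (\<rho> g *\<^sub>v x) (\<rho> g *\<^sub>v y) = bform B x y"
  using act unfolding form_preserving_action_def by auto

lemma rmv: "g \<in> carrier G \<Longrightarrow> h \<in> carrier G \<Longrightarrow> x \<in> carrier_vec n \<Longrightarrow>
  \<rho> g *\<^sub>v (\<rho> h *\<^sub>v x) = \<rho> (g \<otimes>\<^bsub>G\<^esub> h) *\<^sub>v x"
  using rmult rc by (metis assoc_mult_mat_vec)

lemma rinv: "g \<in> carrier G \<Longrightarrow> x \<in> carrier_vec n \<Longrightarrow> \<rho> g *\<^sub>v (\<rho> (inv\<^bsub>G\<^esub> g) *\<^sub>v x) = x"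
  using rmv[of g "inv\<^bsub>G\<^esub> g" x] grp rone by (simp add: group.inv_closed group.r_inv)

lemma Mc: "invariants n G \<rho> \<subseteq> carrier_vec n" unfolding invariants_def by auto

lemma M0: "0\<^sub>v n \<in> invariants n G \<rho>"
proof -
  have "\<rho> g *\<^sub>v 0\<^sub>v n = 0\<^sub>v n" if g: "g \<in> carrier G" for g
    using rc[OF g] by (intro eq_vecI) (auto simp: mv_sum)
  then show ?thesis unfolding invariants_def by auto
qed

lemma Madd: "x \<in> invariants n G \<rho> \<Longrightarrow> y \<in> invariants n G \<rho> \<Longrightarrow> x + y \<in> invariants n G \<rho>"
  unfolding invariants_def using rc by (auto simp: mult_add_distrib_mat_vec[OF rc])

lemma Msm: "x \<in> invariants n G \<rho> \<Longrightarrow> c \<cdot>\<^sub>v x \<in> invariants n G \<rho>"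
proof -
  assume x: "x \<in> invariants n G \<rho>"
  have "\<rho> g *\<^sub>v (c \<cdot>\<^sub>v x) = c \<cdot>\<^sub>v x" if g: "g \<in> carrier G" for g
  proof
    have xc: "x \<in> carrier_vec n" using x Mc by auto
    show "dim_vec (\<rho> g *\<^sub>v (c \<cdot>\<^sub>v x)) = dim_vec (c \<cdot>\<^sub>v x)" using rc[OF g] xc by auto
    fix i assume "i < dim_vec (c \<cdot>\<^sub>v x)"
    then have i: "i < n" using xc by auto
    have "(\<rho> g *\<^sub>v (c \<cdot>\<^sub>v x)) $ i = c * (\<rho> g *\<^sub>v x) $ i"
      using rc[OF g] xc i by (simp add: mv_sum sum_distrib_left mult_ac)
    also have "\<dots> = c * x $ i" using x g unfolding invariants_def by auto
    finally show "(\<rho> g *\<^sub>v (c \<cdot>\<^sub>v x)) $ i = (c \<cdot>\<^sub>v x) $ i" using i xc by auto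
  qed
  then show ?thesis using x unfolding invariants_def by auto
qed

definition P :: "int vec \<Rightarrow> int vec" where
  "P x = vec n (\<lambda>m. \<Sum>g\<in>carrier G. (\<rho> g *\<^sub>v x) $ m)"

lemma Pc: "P x \<in> carrier_vec n" unfolding P_def by auto

lemma Pe: "l < n \<Longrightarrow> m < n \<Longrightarrow> P (unit_vec n l) $ m = (\<Sum>g\<in>carrier G. \<rho> g $$ (m, l))"
  unfolding P_def using rc by (simp, intro sum.cong refl) (auto simp: mv_unit)

lemma P_lin: "x \<in> carrier_vec n \<Longrightarrow> m < n \<Longrightarrow> P x $ m = (\<Sum>l<n. x $ l * P (unit_vec n l) $ m)"
proof -
  assume x: "x \<in> carrier_vec n" and m: "m < n"
  have "P x $ m = (\<Sum>g\<in>carrier G. \<Sum>l<n. \<rho> g $$ (m, l) * x $ l)"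
    unfolding P_def using m x rc by (simp add: mv_sum[OF rc])
  also have "\<dots> = (\<Sum>l<n. \<Sum>g\<in>carrier G. \<rho> g $$ (m, l) * x $ l)" by (rule sum.swap)
  also have "\<dots> = (\<Sum>l<n. x $ l * P (unit_vec n l) $ m)"
    using m by (simp add: Pe sum_distrib_left mult_ac)
  finally show ?thesis .
qed

lemma P_inv: "h \<in> carrier G \<Longrightarrow> x \<in> carrier_vec n \<Longrightarrow> \<rho> h *\<^sub>v P x = P x"
proof
  assume h: "h \<in> carrier G" and x: "x \<in> carrier_vec n"
  show "dim_vec (\<rho> h *\<^sub>v P x) = dim_vec (P x)" using rc[OF h] Pc[of x] by auto
  fix m assume "m < dim_vec (P x)"
  then have m: "m < n" using Pc[of x] by auto
  have "(\<rho> h *\<^sub>v P x) $ m = (\<Sum>l<n. \<rho> h $$ (m, l) * (\<Sum>g\<in>carrier G. (\<rho> g *\<^sub>v x) $ l))"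
    by (subst mv_sum[OF rc[OF h] Pc m]) (simp add: P_def)
  also have "\<dots> = (\<Sum>l<n. \<Sum>g\<in>carrier G. \<rho> h $$ (m, l) * (\<rho> g *\<^sub>v x) $ l)"
    by (simp add: sum_distrib_left)
  also have "\<dots> = (\<Sum>g\<in>carrier G. \<Sum>l<n. \<rho> h $$ (m, l) * (\<rho> g *\<^sub>v x) $ l)" by (rule sum.swap)
  also have "\<dots> = (\<Sum>g\<in>carrier G. (\<rho> h *\<^sub>v (\<rho> g *\<^sub>v x)) $ m)"
  proof (intro sum.cong refl)
    fix g assume g: "g \<in> carrier G"
    have "\<rho> g *\<^sub>v x \<in> carrier_vec n" using rc[OF g] x by auto
    from mv_sum[OF rc[OF h] this m] show "(\<Sum>l<n. \<rho> h $$ (m, l) * (\<rho> g *\<^sub>v x) $ l) = (\<rho> h *\<^sub>v (\<rho> g *\<^sub>v x)) $ m" by simp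
  qed
  also have "\<dots> = (\<Sum>g\<in>carrier G. (\<rho> (h \<otimes>\<^bsub>G\<^esub> g) *\<^sub>v x) $ m)"
    using rmv h x by auto
  also have "\<dots> = (\<Sum>g\<in>(\<lambda>g. h \<otimes>\<^bsub>G\<^esub> g) ` carrier G. (\<rho> g *\<^sub>v x) $ m)"
    using sum.reindex[OF group.inj_on_cmult[OF grp h], of "\<lambda>g. (\<rho> g *\<^sub>v x) $ m"] by auto
  also have "\<dots> = P x $ m" using group.surj_const_mult[OF grp h] m unfolding P_def by auto
  finally show "(\<rho> h *\<^sub>v P x) $ m = P x $ m" .
qed

lemma P_M: "x \<in> carrier_vec n \<Longrightarrow> P x \<in> invariants n G \<rho>"
  unfolding invariants_def using P_inv Pc by auto

lemma surj_multc: "g \<in> carrier G \<Longrightarrow> (\<lambda>h. h \<otimes>\<^bsub>G\<^esub> g) ` carrier G = carrier G"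
proof
  assume g: "g \<in> carrier G"
  show "(\<lambda>h. h \<otimes>\<^bsub>G\<^esub> g) ` carrier G \<subseteq> carrier G" using g grp by (auto simp: group.is_monoid monoid.m_closed)
  show "carrier G \<subseteq> (\<lambda>h. h \<otimes>\<^bsub>G\<^esub> g) ` carrier G"
  proof
    fix k assume k: "k \<in> carrier G"
    have "k = (k \<otimes>\<^bsub>G\<^esub> inv\<^bsub>G\<^esub> g) \<otimes>\<^bsub>G\<^esub> g" using g k grp
      by (simp add: group.inv_closed group.l_inv monoid.m_assoc group.is_monoid)
    moreover have "k \<otimes>\<^bsub>G\<^esub> inv\<^bsub>G\<^esub> g \<in> carrier G" using g k grp
      by (simp add: group.inv_closed group.is_monoid monoid.m_closed)
    ultimately show "k \<in> (\<lambda>h. h \<otimes>\<^bsub>G\<^esub> g) ` carrier G" by blast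
  qed
qed

lemma P_right: "g \<in> carrier G \<Longrightarrow> x \<in> carrier_vec n \<Longrightarrow> P (\<rho> g *\<^sub>v x) = P x"
proof -
  assume g: "g \<in> carrier G" and x: "x \<in> carrier_vec n"
  have "(\<Sum>h\<in>carrier G. (\<rho> h *\<^sub>v (\<rho> g *\<^sub>v x)) $ m) = (\<Sum>h\<in>carrier G. (\<rho> h *\<^sub>v x) $ m)" for m
  proof -
    have "(\<Sum>h\<in>carrier G. (\<rho> h *\<^sub>v (\<rho> g *\<^sub>v x)) $ m) = (\<Sum>h\<in>carrier G. (\<rho> (h \<otimes>\<^bsub>G\<^esub> g) *\<^sub>v x) $ m)"
      using rmv g x by auto
    also have "\<dots> = (\<Sum>h\<in>(\<lambda>h. h \<otimes>\<^bsub>G\<^esub> g) ` carrier G. (\<rho> h *\<^sub>v x) $ m)"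
      using sum.reindex[OF group.inj_on_multc[OF grp g], of "\<lambda>h. (\<rho> h *\<^sub>v x) $ m"] by auto
    also have "\<dots> = (\<Sum>h\<in>carrier G. (\<rho> h *\<^sub>v x) $ m)" using surj_multc[OF g] by simp
    finally show ?thesis .
  qed
  then show ?thesis unfolding P_def by auto
qed

lemma P_fix: "x \<in> invariants n G \<rho> \<Longrightarrow> m < n \<Longrightarrow> P x $ m = int (card (carrier G)) * x $ m"
  unfolding P_def invariants_def by auto

end


locale latb = lat +
  fixes vs :: "int vec list"
  assumes bas: "is_Z_basis n (invariants n G \<rho>) vs"
begin

abbreviation "r \<equiv> length vs"
abbreviation "N \<equiv> int (card (carrier G))"

lemma vsc: "set vs \<subseteq> carrier_vec n" using bas Mc unfolding is_Z_basis_def by auto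
lemma vsM: "i < r \<Longrightarrow> vs ! i \<in> invariants n G \<rho>" using bas unfolding is_Z_basis_def by auto
lemma vsic: "i < r \<Longrightarrow> vs ! i \<in> carrier_vec n" using vsM Mc by auto

lemma indep: "(\<And>m. m < n \<Longrightarrow> (\<Sum>i<r. c i * vs ! i $ m) = 0) \<Longrightarrow> i < r \<Longrightarrow> c i = 0"
  using bas unfolding is_Z_basis_iff[OF vsc Mc] by blast

lemma span: "x \<in> invariants n G \<rho> \<Longrightarrow> \<exists>c. \<forall>m<n. x $ m = (\<Sum>i<r. c i * vs ! i $ m)"
  using bas unfolding is_Z_basis_iff[OF vsc Mc] by blast

lemma uniq: "(\<And>m. m < n \<Longrightarrow> (\<Sum>i<r. c i * vs ! i $ m) = (\<Sum>i<r. c' i * vs ! i $ m)) \<Longrightarrow> i < r \<Longrightarrow> c i = c' i"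
proof -
  assume h: "\<And>m. m < n \<Longrightarrow> (\<Sum>i<r. c i * vs ! i $ m) = (\<Sum>i<r. c' i * vs ! i $ m)" and i: "i < r"
  have "(\<Sum>i<r. (c i - c' i) * vs ! i $ m) = 0" if "m < n" for m
    using h[OF that] by (simp add: left_diff_distrib sum_subtractf)
  then have "c i - c' i = 0" using indep[of "\<lambda>i. c i - c' i", OF _ i] by blast
  then show ?thesis by simp
qed

definition C :: "nat \<Rightarrow> nat \<Rightarrow> int" where
  "C l = (SOME c. \<forall>m<n. P (unit_vec n l) $ m = (\<Sum>i<r. c i * vs ! i $ m))"

lemma C_spec: "l < n \<Longrightarrow> m < n \<Longrightarrow> P (unit_vec n l) $ m = (\<Sum>i<r. C l i * vs ! i $ m)"
proof -
  assume l: "l < n" and m: "m < n"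
  have "\<exists>c. \<forall>m<n. P (unit_vec n l) $ m = (\<Sum>i<r. c i * vs ! i $ m)"
    using span[OF P_M[of "unit_vec n l"]] by auto
  from someI_ex[OF this] show ?thesis using m unfolding C_def by blast
qed

lemma coefP: "x \<in> carrier_vec n \<Longrightarrow> m < n \<Longrightarrow>
  P x $ m = (\<Sum>i<r. (\<Sum>l<n. x $ l * C l i) * vs ! i $ m)"
proof -
  assume x: "x \<in> carrier_vec n" and m: "m < n"
  have "P x $ m = (\<Sum>l<n. x $ l * (\<Sum>i<r. C l i * vs ! i $ m))"
    using P_lin[OF x m] C_spec m by simp
  also have "\<dots> = (\<Sum>l<n. \<Sum>i<r. x $ l * C l i * vs ! i $ m)"
    by (simp add: sum_distrib_left mult_ac)
  also have "\<dots> = (\<Sum>i<r. \<Sum>l<n. x $ l * C l i * vs ! i $ m)" by (rule sum.swap)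
  also have "\<dots> = (\<Sum>i<r. (\<Sum>l<n. x $ l * C l i) * vs ! i $ m)"
    by (simp add: sum_distrib_right)
  finally show ?thesis .
qed

lemma lemA: "x \<in> invariants n G \<rho> \<Longrightarrow> (\<And>m. m < n \<Longrightarrow> x $ m = (\<Sum>i<r. a i * vs ! i $ m)) \<Longrightarrow> i < r \<Longrightarrow>
  (\<Sum>l<n. x $ l * C l i) = N * a i"
proof -
  assume xM: "x \<in> invariants n G \<rho>" and a: "\<And>m. m < n \<Longrightarrow> x $ m = (\<Sum>i<r. a i * vs ! i $ m)" and i: "i < r"
  have x: "x \<in> carrier_vec n" using xM Mc by auto
  have "(\<Sum>i<r. (\<Sum>l<n. x $ l * C l i) * vs ! i $ m) = (\<Sum>i<r. (N * a i) * vs ! i $ m)" if m: "m < n" for m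
  proof -
    have "(\<Sum>i<r. (\<Sum>l<n. x $ l * C l i) * vs ! i $ m) = P x $ m" using coefP[OF x m] by simp
    also have "\<dots> = N * x $ m" using P_fix[OF xM m] .
    also have "\<dots> = (\<Sum>i<r. (N * a i) * vs ! i $ m)" using a[OF m] by (simp add: sum_distrib_left mult_ac)
    finally show ?thesis .
  qed
  from uniq[OF this i] show ?thesis .
qed

lemma lemB: "x \<in> carrier_vec n \<Longrightarrow> g \<in> carrier G \<Longrightarrow> i < r \<Longrightarrow>
  (\<Sum>l<n. (\<rho> g *\<^sub>v x) $ l * C l i) = (\<Sum>l<n. x $ l * C l i)"
proof -
  assume x: "x \<in> carrier_vec n" and g: "g \<in> carrier G" and i: "i < r"
  have gx: "\<rho> g *\<^sub>v x \<in> carrier_vec n" using rc[OF g] x by auto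
  have "(\<Sum>i<r. (\<Sum>l<n. (\<rho> g *\<^sub>v x) $ l * C l i) * vs ! i $ m) = (\<Sum>i<r. (\<Sum>l<n. x $ l * C l i) * vs ! i $ m)"
    if m: "m < n" for m
    using coefP[OF gx m] coefP[OF x m] P_right[OF g x] by simp
  from uniq[OF this i] show ?thesis .
qed

end


lemma smult_one_mv: "(v :: int vec) \<in> carrier_vec n \<Longrightarrow> (a \<cdot>\<^sub>m 1\<^sub>m n) *\<^sub>v v = a \<cdot>\<^sub>v v"
proof
  assume v: "v \<in> carrier_vec n"
  show "dim_vec ((a \<cdot>\<^sub>m 1\<^sub>m n) *\<^sub>v v) = dim_vec (a \<cdot>\<^sub>v v)" using v by auto
  fix i assume "i < dim_vec (a \<cdot>\<^sub>v v)"
  then have i: "i < n" using v by auto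
  have "((a \<cdot>\<^sub>m 1\<^sub>m n) *\<^sub>v v) $ i = (\<Sum>l<n. (a \<cdot>\<^sub>m 1\<^sub>m n) $$ (i, l) * v $ l)"
    using v i by (intro mv_sum) auto
  also have "\<dots> = (\<Sum>l<n. (if l = i then a * v $ l else 0))"
    using i by (intro sum.cong refl) auto
  also have "\<dots> = a * v $ i" using i by simp
  finally show "((a \<cdot>\<^sub>m 1\<^sub>m n) *\<^sub>v v) $ i = (a \<cdot>\<^sub>v v) $ i" using i v by simp
qed

lemma bform_lin:
  assumes B: "B \<in> carrier_mat n n" and x: "x \<in> carrier_vec n" and z: "z \<in> carrier_vec n"
    and ws: "\<And>l. l < k \<Longrightarrow> ws l \<in> carrier_vec n"
    and zs: "\<And>m. m < n \<Longrightarrow> z $ m = (\<Sum>l<k. u l * ws l $ m)"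
  shows "bform B x z = (\<Sum>l<k. u l * bform B x (ws l))"
proof -
  have "bform B x z = (\<Sum>a<n. x $ a * (\<Sum>b<n. B $$ (a, b) * (\<Sum>l<k. u l * ws l $ b)))"
    using bform_sum[OF B x z] zs by simp
  also have "\<dots> = (\<Sum>a<n. \<Sum>b<n. \<Sum>l<k. x $ a * B $$ (a, b) * u l * ws l $ b)"
    by (simp add: sum_distrib_left mult_ac)
  also have "\<dots> = (\<Sum>a<n. \<Sum>l<k. \<Sum>b<n. x $ a * B $$ (a, b) * u l * ws l $ b)"
    by (intro sum.cong refl sum.swap)
  also have "\<dots> = (\<Sum>l<k. \<Sum>a<n. \<Sum>b<n. x $ a * B $$ (a, b) * u l * ws l $ b)"
    by (rule sum.swap)
  also have "\<dots> = (\<Sum>l<k. u l * (\<Sum>a<n. x $ a * (\<Sum>b<n. B $$ (a, b) * ws l $ b)))"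
    by (simp add: sum_distrib_left mult_ac)
  also have "\<dots> = (\<Sum>l<k. u l * bform B x (ws l))"
    using bform_sum[OF B x ws] by simp
  finally show ?thesis .
qed

context latb begin

definition lam :: "nat \<Rightarrow> int vec" where "lam j = vec n (\<lambda>l. C l j)"
definition y :: "nat \<Rightarrow> int vec" where "y j = adj_mat B *\<^sub>v lam j"

lemma adjc: "adj_mat B \<in> carrier_mat n n" using adj_mat(1)[OF Bc] .
lemma lamc: "lam j \<in> carrier_vec n" unfolding lam_def by auto
lemma yc: "y j \<in> carrier_vec n" unfolding y_def using adjc lamc by auto

lemma By: "B *\<^sub>v y j = det B \<cdot>\<^sub>v lam j"
proof -
  have "B *\<^sub>v y j = (B * adj_mat B) *\<^sub>v lam j" unfolding y_def using Bc adjc lamc by simp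
  also have "\<dots> = det B \<cdot>\<^sub>v lam j" using adj_mat(2)[OF Bc] smult_one_mv[OF lamc] by simp
  finally show ?thesis .
qed

lemma bform_y: "x \<in> carrier_vec n \<Longrightarrow> bform B x (y j) = det B * (\<Sum>l<n. x $ l * C l j)"
proof -
  assume x: "x \<in> carrier_vec n"
  have "bform B x (y j) = x \<bullet> (det B \<cdot>\<^sub>v lam j)" unfolding bform_def By ..
  also have "\<dots> = det B * (x \<bullet> lam j)" using x lamc by simp
  also have "x \<bullet> lam j = (\<Sum>l<n. x $ l * C l j)"
    unfolding scalar_prod_def lam_def by (simp add: atLeast0LessThan)
  finally show ?thesis .
qed

lemma cancelB: "z1 \<in> carrier_vec n \<Longrightarrow> z2 \<in> carrier_vec n \<Longrightarrow> B *\<^sub>v z1 = B *\<^sub>v z2 \<Longrightarrow> z1 = z2"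
proof -
  assume z1: "z1 \<in> carrier_vec n" and z2: "z2 \<in> carrier_vec n" and e: "B *\<^sub>v z1 = B *\<^sub>v z2"
  have "det B \<cdot>\<^sub>v z = adj_mat B *\<^sub>v (B *\<^sub>v z)" if "z \<in> carrier_vec n" for z
  proof -
    have "adj_mat B *\<^sub>v (B *\<^sub>v z) = (adj_mat B * B) *\<^sub>v z" using adjc Bc that by simp
    also have "\<dots> = det B \<cdot>\<^sub>v z" using adj_mat(3)[OF Bc] smult_one_mv[OF that] by simp
    finally show ?thesis by simp
  qed
  then have e2: "det B \<cdot>\<^sub>v z1 = det B \<cdot>\<^sub>v z2" using z1 z2 e by metis
  show "z1 = z2"
  proof
    show "dim_vec z1 = dim_vec z2" using z1 z2 by auto
    fix i assume "i < dim_vec z2"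
    then have i: "i < n" using z2 by auto
    have "det B * z1 $ i = det B * z2 $ i"
      using arg_cong[OF e2, of "\<lambda>v. v $ i"] i z1 z2 by simp
    then show "z1 $ i = z2 $ i" using dB by simp
  qed
qed

lemma yM: "j < r \<Longrightarrow> y j \<in> invariants n G \<rho>"
proof -
  assume j: "j < r"
  have "\<rho> g *\<^sub>v y j = y j" if g: "g \<in> carrier G" for g
  proof (rule cancelB)
    show zc: "\<rho> g *\<^sub>v y j \<in> carrier_vec n" using rc[OF g] yc by auto
    show "y j \<in> carrier_vec n" by (rule yc)
    have gi: "inv\<^bsub>G\<^esub> g \<in> carrier G" using g grp by (simp add: group.inv_closed)
    have key: "bform B x (\<rho> g *\<^sub>v y j) = bform B x (y j)" if x: "x \<in> carrier_vec n" for x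
    proof -
      define x' where "x' = \<rho> (inv\<^bsub>G\<^esub> g) *\<^sub>v x"
      have x'c: "x' \<in> carrier_vec n" unfolding x'_def using rc[OF gi] x by auto
      have "x = \<rho> g *\<^sub>v x'" unfolding x'_def using rinv[OF g x] by simp
      then have "bform B x (\<rho> g *\<^sub>v y j) = bform B x' (y j)" using rform[OF g x'c yc] by simp
      also have "\<dots> = det B * (\<Sum>l<n. x' $ l * C l j)" using bform_y[OF x'c] .
      also have "(\<Sum>l<n. x' $ l * C l j) = (\<Sum>l<n. x $ l * C l j)"
        unfolding x'_def using lemB[OF x gi j] .
      finally show ?thesis using bform_y[OF x] by simp
    qed
    show "B *\<^sub>v (\<rho> g *\<^sub>v y j) = B *\<^sub>v y j"
    proof
      show "dim_vec (B *\<^sub>v (\<rho> g *\<^sub>v y j)) = dim_vec (B *\<^sub>v y j)" using Bc by simp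
      fix i assume "i < dim_vec (B *\<^sub>v y j)"
      then have i: "i < n" using Bc by simp
      have "(B *\<^sub>v (\<rho> g *\<^sub>v y j)) $ i = bform B (unit_vec n i) (\<rho> g *\<^sub>v y j)"
        unfolding bform_def using Bc zc i by simp
      also have "\<dots> = bform B (unit_vec n i) (y j)" using key i by simp
      also have "\<dots> = (B *\<^sub>v y j) $ i"
        unfolding bform_def using Bc yc i by simp
      finally show "(B *\<^sub>v (\<rho> g *\<^sub>v y j)) $ i = (B *\<^sub>v y j) $ i" .
    qed
  qed
  then show ?thesis unfolding invariants_def using yc by auto
qed

end


lemma delta_sum: "i < (r::nat) \<Longrightarrow> (\<Sum>ia<r. (if ia = i then 1 else 0) * f ia) = (f i :: int)"
proof -
  assume i: "i < r"
  have "(\<Sum>ia<r. (if ia = i then 1 else 0) * f ia) = (\<Sum>ia<r. if ia = i then f ia else 0)"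
    by (intro sum.cong) auto
  also have "\<dots> = f i" using i by (subst sum.delta) auto
  finally show ?thesis .
qed

context latb begin

definition u :: "nat \<Rightarrow> nat \<Rightarrow> int" where
  "u j = (SOME c. \<forall>m<n. y j $ m = (\<Sum>i<r. c i * vs ! i $ m))"

lemma u_spec: "j < r \<Longrightarrow> m < n \<Longrightarrow> y j $ m = (\<Sum>i<r. u j i * vs ! i $ m)"
proof -
  assume j: "j < r" and m: "m < n"
  from someI_ex[OF span[OF yM[OF j]]] show ?thesis using m unfolding u_def by blast
qed

lemma vs_delta: "i < r \<Longrightarrow> m < n \<Longrightarrow> vs ! i $ m = (\<Sum>ia<r. (if ia = i then 1 else 0) * vs ! ia $ m)"
  using delta_sum[of i r "\<lambda>ia. vs ! ia $ m"] by simp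

lemma gram_u: "i < r \<Longrightarrow> j < r \<Longrightarrow>
  (\<Sum>l<r. gram B vs $$ (i, l) * u j l) = det B * N * (if i = j then 1 else 0)"
proof -
  assume i: "i < r" and j: "j < r"
  have "(\<Sum>l<r. gram B vs $$ (i, l) * u j l) = (\<Sum>l<r. u j l * bform B (vs ! i) (vs ! l))"
    using i by (intro sum.cong refl) (auto simp: gram_def)
  also have "\<dots> = bform B (vs ! i) (y j)"
    using bform_lin[OF Bc vsic[OF i] yc, where k=r and ws="\<lambda>l. vs ! l" and u="u j"] vsic u_spec[OF j] by simp
  also have "\<dots> = det B * (\<Sum>l<n. vs ! i $ l * C l j)" using bform_y[OF vsic[OF i]] .
  also have "(\<Sum>l<n. vs ! i $ l * C l j) = N * (\<lambda>l. if l = i then 1 else 0) j"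
    by (rule lemA[OF vsM[OF i] vs_delta[OF i] j])
  finally show ?thesis by auto
qed

definition U :: "int mat" where "U = mat r r (\<lambda>(l, j). u j l)"

lemma gramU: "gram B vs * U = (det B * N) \<cdot>\<^sub>m 1\<^sub>m r"
proof (rule eq_matI)
  show "dim_row (gram B vs * U) = dim_row ((det B * N) \<cdot>\<^sub>m 1\<^sub>m r)" by (simp add: gram_def)
  show "dim_col (gram B vs * U) = dim_col ((det B * N) \<cdot>\<^sub>m 1\<^sub>m r)" by (simp add: U_def)
  fix i j assume i: "i < dim_row ((det B * N) \<cdot>\<^sub>m 1\<^sub>m r)" and j: "j < dim_col ((det B * N) \<cdot>\<^sub>m 1\<^sub>m r)"
  then have i: "i < r" and j: "j < r" by auto
  have "(gram B vs * U) $$ (i, j) = (\<Sum>l<r. gram B vs $$ (i, l) * u j l)"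
    using i j by (simp add: gram_def U_def scalar_prod_def atLeast0LessThan)
  also have "\<dots> = ((det B * N) \<cdot>\<^sub>m 1\<^sub>m r) $$ (i, j)" using gram_u[OF i j] i j by simp
  finally show "(gram B vs * U) $$ (i, j) = ((det B * N) \<cdot>\<^sub>m 1\<^sub>m r) $$ (i, j)" .
qed

lemma det_dvd: "det (gram B vs) dvd (det B * N) ^ r \<and> det (gram B vs) \<noteq> 0"
proof -
  have gc: "gram B vs \<in> carrier_mat r r" by (simp add: gram_def)
  have Uc: "U \<in> carrier_mat r r" by (simp add: U_def)
  have e: "det (gram B vs) * det U = (det B * N) ^ r"
    using det_mult[OF gc Uc] gramU by simp
  have "\<one>\<^bsub>G\<^esub> \<in> carrier G" by (simp add: group.is_monoid[OF grp] monoid.one_closed)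
  then have "carrier G \<noteq> {}" by auto
  then have "card (carrier G) > 0" using fin by (simp add: card_gt_0_iff)
  then have N0: "N \<noteq> 0" by simp
  have d1: "det (gram B vs) dvd (det B * N) ^ r" unfolding e[symmetric] by simp
  have "(det B * N) ^ r \<noteq> 0" using dB N0 by simp
  then have "det (gram B vs) \<noteq> 0" unfolding e[symmetric] by auto
  then show ?thesis using d1 by simp
qed

lemma rpos: "invariants n G \<rho> \<noteq> {0\<^sub>v n} \<Longrightarrow> r > 0"
proof (rule ccontr)
  assume ne: "invariants n G \<rho> \<noteq> {0\<^sub>v n}" and "\<not> r > 0"
  then have r0: "r = 0" by simp
  have "x = 0\<^sub>v n" if x: "x \<in> invariants n G \<rho>" for x
  proof -
    obtain c where c: "\<forall>m<n. x $ m = (\<Sum>i<r. c i * vs ! i $ m)" using span[OF x] by blast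
    have xc: "x \<in> carrier_vec n" using x Mc by blast
    show ?thesis
    proof (rule eq_vecI)
      fix m assume "m < dim_vec (0\<^sub>v n)"
      then have m: "m < n" by simp
      have "x $ m = (\<Sum>i<r. c i * vs ! i $ m)" using c m by blast
      also have "\<dots> = 0" using r0 by simp
      finally show "x $ m = 0\<^sub>v n $ m" using m by simp
    next
      show "dim_vec x = dim_vec (0\<^sub>v n)" using xc by simp
    qed
  qed
  then have "invariants n G \<rho> = {0\<^sub>v n}" using M0 by blast
  then show False using ne by simp
qed

end


theorem lemma2p1:
  fixes G :: "('g, 'b) monoid_scheme" and \<rho> :: "'g \<Rightarrow> int mat"
    and B :: "int mat" and n :: nat
  assumes "group G"
    and "finite (carrier G)"
    and "is_lattice_gram n B"
    and "form_preserving_action n B G \<rho>"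
    and "invariants n G \<rho> \<noteq> {0\<^sub>v n}"
  shows "(\<exists>vs. is_Z_basis n (invariants n G \<rho>) vs) \<and>
         (\<forall>vs. is_Z_basis n (invariants n G \<rho>) vs \<longrightarrow>
              length vs > 0 \<and> det (gram B vs) \<noteq> 0 \<and>
              det (gram B vs) dvd (det B * int (card (carrier G))) ^ length vs)"
proof -
  have L: "lat G \<rho> B n" using assms(1-4) by (intro lat.intro)
  interpret lat G \<rho> B n by (rule L)
  show ?thesis
  proof
  have "\<exists>vs. is_Z_basis n {x\<in>invariants n G \<rho>. \<forall>i. n \<le> i \<and> i < n \<longrightarrow> x $ i = 0} vs"
    by (intro subgroup_basis_aux[OF Mc M0 Madd Msm] order_refl)
  then show "\<exists>vs. is_Z_basis n (invariants n G \<rho>) vs" by simp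
  show "\<forall>vs. is_Z_basis n (invariants n G \<rho>) vs \<longrightarrow>
              length vs > 0 \<and> det (gram B vs) \<noteq> 0 \<and>
              det (gram B vs) dvd (det B * int (card (carrier G))) ^ length vs"
  proof (intro allI impI)
    fix vs assume vs: "is_Z_basis n (invariants n G \<rho>) vs"
    interpret latb G \<rho> B n vs by (rule latb.intro[OF L latb_axioms.intro[OF vs]])
    show "length vs > 0 \<and> det (gram B vs) \<noteq> 0 \<and>
              det (gram B vs) dvd (det B * int (card (carrier G))) ^ length vs"
      using det_dvd rpos[OF assms(5)] by simp
  qed
  qed
qed

end
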